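(* Let $q$ be a prime power, $2\le n\le m$, let $C\subseteq\mathbb{F}_{q^m}^n$ be a vector rank-metric code, and let $\Gamma,\Gamma'$ be $\mathbb{F}_q$-bases of $\mathbb{F}_{q^m}$. Then $P(\Gamma(C),\mathrm c)=P(\Gamma'(C),\mathrm c)$ and $P(\Gamma(C),\mathrm r)\sim P(\Gamma'(C),\mathrm r)$.
   Context: A vector rank-metric code is an $\mathbb{F}_{q^m}$-linear subspace of $\mathbb{F}_{q^m}^n$. For an $\mathbb{F}_q$-basis $\Gamma=\{\gamma_1,\dots,\gamma_m\}$ of $\mathbb{F}_{q^m}$ and $v\in\mathbb{F}_{q^m}^n$, $\Gamma(v)$ is the unique $n\times m$ matrix over $\mathbb{F}_q$ with $v_i=\sum_j\Gamma(v)_{ij}\gamma_j$, and $\Gamma(C)=\{\Gamma(v)\mid v\in C\}$, an $\mathbb{F}_q$-linear subspace of the space $\mathrm{Mat}$ of $n\times m$ matrices over $\mathbb{F}_q$. For such a subspace $\mathcal{C}$ and subspaces $J\subseteq\mathbb{F}_q^n$, $K\subseteq\mathbb{F}_q^m$: $\mathcal{C}(J,\mathrm c)=\{M\in\mathcal{C}\mid\mathrm{colsp}(M)\subseteq J\}$, $\mathcal{C}(K,\mathrm r)=\{M\in\mathcal{C}\mid\mathrm{rowsp}(M)\subseteq K\}$, $\rho_{\mathrm c}(\mathcal{C},J)=(\dim\mathcal{C}-\dim\mathcal{C}(J^\perp,\mathrm c))/m$, $\rho_{\mathrm r}(\mathcal{C},K)=(\dim\mathcal{C}-\dim\mathcal{C}(K^\perp,\mathrm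 r))/n$ ($\perp$ for the standard inner product); $P(\mathcal{C},\mathrm c)=(\mathbb{F}_q^n,\rho_{\mathrm c}(\mathcal{C},\cdot))$, $P(\mathcal{C},\mathrm r)=(\mathbb{F}_q^m,\rho_{\mathrm r}(\mathcal{C},\cdot))$. Two pairs $(\mathbb{F}_q^N,\rho_1)$, $(\mathbb{F}_q^N,\rho_2)$ are equivalent ($\sim$) if there is an $\mathbb{F}_q$-linear isomorphism $\varphi$ of $\mathbb{F}_q^N$ with $\rho_1(A)=\rho_2(\varphi(A))$ for all subspaces $A$. *)

theory Defs
  imports "HOL-Analysis.Analysis"
begin

text \<open>F_q is a finite field type 'k, F_{q^m} a field type 'K, with the inclusion
  F_q into F_{q^m} given by a ring homomorphism emb. An F_q-basis of F_{q^m} is indexed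
  by a finite type 'm with CARD('m) = m. Vectors of F_q^n are 'k^'n; n x m matrices
  over F_q are 'k^('n \<times> 'm), entry (i,j) being M$(i,j).\<close>

definition is_Fq_basis :: "('k::field \<Rightarrow> 'K::field) \<Rightarrow> ('m::finite \<Rightarrow> 'K) \<Rightarrow> bool" where
  "is_Fq_basis emb \<gamma> \<longleftrightarrow> (\<forall>x. \<exists>!c::'k^'m. x = (\<Sum>j\<in>UNIV. emb (c$j) * \<gamma> j))"

definition Gamma_vec :: "('k::field \<Rightarrow> 'K::field) \<Rightarrow> ('m::finite \<Rightarrow> 'K) \<Rightarrow> 'K^'n::finite \<Rightarrow> 'k^('n \<times> 'm)" where
  "Gamma_vec emb \<gamma> v = (\<chi> p. (THE c::'k^'m. v$(fst p) = (\<Sum>j\<in>UNIV. emb (c$j) * \<gamma> j)) $ (snd p))"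

definition Gamma_code :: "('k::field \<Rightarrow> 'K::field) \<Rightarrow> ('m::finite \<Rightarrow> 'K) \<Rightarrow> ('K^'n::finite) set \<Rightarrow> ('k^('n \<times> 'm)) set" where
  "Gamma_code emb \<gamma> C = Gamma_vec emb \<gamma> ` C"

definition colsp :: "'k::field^('n::finite \<times> 'm::finite) \<Rightarrow> ('k^'n) set" where
  "colsp M = vec.span (range (\<lambda>j::'m. \<chi> i::'n. M$(i,j)))"

definition rowsp :: "'k::field^('n::finite \<times> 'm::finite) \<Rightarrow> ('k^'m) set" where
  "rowsp M = vec.span (range (\<lambda>i::'n. \<chi> j::'m. M$(i,j)))"

text \<open>Orthogonal complement w.r.t. the standard bilinear form.\<close>
definition orth :: "('k::field^'n::finite) set \<Rightarrow> ('k^'n) set" where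
  "orth J = {x. \<forall>y\<in>J. (\<Sum>i\<in>UNIV. x$i * y$i) = 0}"

definition code_c :: "('k::field^('n::finite \<times> 'm::finite)) set \<Rightarrow> ('k^'n) set \<Rightarrow> ('k^('n \<times> 'm)) set" where
  "code_c Cm J = {M \<in> Cm. colsp M \<subseteq> J}"

definition code_r :: "('k::field^('n::finite \<times> 'm::finite)) set \<Rightarrow> ('k^'m) set \<Rightarrow> ('k^('n \<times> 'm)) set" where
  "code_r Cm K = {M \<in> Cm. rowsp M \<subseteq> K}"

definition rho_c :: "('k::field^('n::finite \<times> 'm::finite)) set \<Rightarrow> ('k^'n) set \<Rightarrow> real" where
  "rho_c Cm J = (real (vec.dim Cm) - real (vec.dim (code_c Cm (orth J)))) / real CARD('m)"

definition rho_r :: "('k::field^('n::finite \<times> 'm::finite)) set \<Rightarrow> ('k^'m) set \<Rightarrow> real" where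
  "rho_r Cm K = (real (vec.dim Cm) - real (vec.dim (code_r Cm (orth K)))) / real CARD('n)"

text \<open>Equivalence of pairs (F_q^N, rho1), (F_q^N, rho2); rho's are considered on subspaces.\<close>
definition pair_equiv :: "(('k::field^'N::finite) set \<Rightarrow> real) \<Rightarrow> (('k^'N) set \<Rightarrow> real) \<Rightarrow> bool" where
  "pair_equiv \<rho>1 \<rho>2 \<longleftrightarrow> (\<exists>\<phi>. Vector_Spaces.linear (*s) (*s) \<phi> \<and> bij \<phi> \<and>
      (\<forall>A. vec.subspace A \<longrightarrow> \<rho>1 A = \<rho>2 (\<phi> ` A)))"

end

theory Submission
  imports Defs
begin

definition Ev :: "('k::field \<Rightarrow> 'K::field) \<Rightarrow> ('m::finite \<Rightarrow> 'K) \<Rightarrow> 'k^'m \<Rightarrow> 'K" where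
  "Ev emb \<gamma> c = (\<Sum>j\<in>UNIV. emb (c$j) * \<gamma> j)"

definition coord :: "('k::field \<Rightarrow> 'K::field) \<Rightarrow> ('m::finite \<Rightarrow> 'K) \<Rightarrow> 'K \<Rightarrow> 'k^'m" where
  "coord emb \<gamma> x = (THE c::'k^'m. x = (\<Sum>j\<in>UNIV. emb (c$j) * \<gamma> j))"

definition Lmap where "Lmap emb \<gamma> \<gamma>' c = coord emb \<gamma>' (Ev emb \<gamma> c)"

definition Rm :: "('k::field^'m::finite \<Rightarrow> 'k^'m) \<Rightarrow> 'k^('n::finite \<times> 'm) \<Rightarrow> 'k^('n \<times> 'm)" where
  "Rm L M = (\<chi> p. L (\<chi> j. M$(fst p, j)) $ snd p)"

definition mrow :: "'k::field^('n::finite \<times> 'm::finite) \<Rightarrow> 'n \<Rightarrow> 'k^'m" where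
  "mrow M i = (\<chi> j. M$(i,j))"

definition mcol :: "'k::field^('n::finite \<times> 'm::finite) \<Rightarrow> 'm \<Rightarrow> 'k^'n" where
  "mcol M j = (\<chi> i. M$(i,j))"

lemma coord_props:
  fixes emb :: "'k::field \<Rightarrow> 'K::field" and \<gamma> :: "'m::finite \<Rightarrow> 'K"
  assumes "is_Fq_basis emb \<gamma>"
  shows coord_props1: "x = Ev emb \<gamma> (coord emb \<gamma> x)" and coord_props2: "Ev emb \<gamma> c = x \<Longrightarrow> coord emb \<gamma> x = c"
proof -
  have ex: "\<exists>!c::'k^'m. x = (\<Sum>j\<in>UNIV. emb (c$j) * \<gamma> j)" by (rule spec[OF assms[unfolded is_Fq_basis_def]])
  show "x = Ev emb \<gamma> (coord emb \<gamma> x)" unfolding Ev_def coord_def using theI'[OF ex] .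
  assume "Ev emb \<gamma> c = x"
  then have "x = (\<Sum>j\<in>UNIV. emb (c$j) * \<gamma> j)" unfolding Ev_def by simp
  then show "coord emb \<gamma> x = c" unfolding coord_def by (rule the1_equality[OF ex])
qed

lemma Ev_add: assumes "\<forall>a b. emb (a + b) = emb a + emb b"
  shows "Ev emb \<gamma> (c + d) = Ev emb \<gamma> c + Ev emb \<gamma> d"
  unfolding Ev_def using assms by (simp add: distrib_right sum.distrib)

lemma Ev_scale: assumes "\<forall>a b. emb (a * b) = emb a * emb b"
  shows "Ev emb \<gamma> (a *s c) = emb a * Ev emb \<gamma> c"
  unfolding Ev_def using assms by (simp add: sum_distrib_left mult.assoc)

lemma coord_add:
  assumes "is_Fq_basis emb \<gamma>" "\<forall>a b. emb (a + b) = emb a + emb b"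
  shows "coord emb \<gamma> (x + y) = coord emb \<gamma> x + coord emb \<gamma> y"
  apply (rule coord_props(2)[OF assms(1)])
  using Ev_add[OF assms(2)] coord_props(1)[OF assms(1)] by metis

lemma coord_scale:
  assumes "is_Fq_basis emb \<gamma>" "\<forall>a b. emb (a * b) = emb a * emb b"
  shows "coord emb \<gamma> (emb a * x) = a *s coord emb \<gamma> x"
  apply (rule coord_props(2)[OF assms(1)])
  using Ev_scale[OF assms(2)] coord_props(1)[OF assms(1)] by metis

lemma Lmap_linear:
  fixes emb :: "'k::field \<Rightarrow> 'K::field" and \<gamma> \<gamma>' :: "'m::finite \<Rightarrow> 'K"
  assumes "is_Fq_basis emb \<gamma>'" "\<forall>a b. emb (a + b) = emb a + emb b" "\<forall>a b. emb (a * b) = emb a * emb b"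
  shows "Vector_Spaces.linear (*s) (*s) (Lmap emb \<gamma> \<gamma>')"
  unfolding Vector_Spaces.linear_iff
proof (intro conjI allI)
  show "vector_space ((*s) :: 'k \<Rightarrow> 'k^'m \<Rightarrow> 'k^'m)" by (rule vec.vector_space_axioms)
  then show "vector_space ((*s) :: 'k \<Rightarrow> 'k^'m \<Rightarrow> 'k^'m)" .
  fix x y :: "'k^'m" and c :: 'k
  show "Lmap emb \<gamma> \<gamma>' (x + y) = Lmap emb \<gamma> \<gamma>' x + Lmap emb \<gamma> \<gamma>' y"
    unfolding Lmap_def Ev_add[OF assms(2)] coord_add[OF assms(1,2)] ..
  show "Lmap emb \<gamma> \<gamma>' (c *s x) = c *s Lmap emb \<gamma> \<gamma>' x"
    unfolding Lmap_def Ev_scale[OF assms(3)] coord_scale[OF assms(1,3)] ..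
qed

lemma Lmap_inv:
  assumes "is_Fq_basis emb \<gamma>" "is_Fq_basis emb \<gamma>'"
  shows "Lmap emb \<gamma>' \<gamma> (Lmap emb \<gamma> \<gamma>' c) = c"
  unfolding Lmap_def
  using coord_props[OF assms(1)] coord_props[OF assms(2)] by metis

lemma Gamma_row: "mrow (Gamma_vec emb \<gamma> v) i = coord emb \<gamma> (v$i)"
  unfolding mrow_def Gamma_vec_def coord_def by (simp add: vec_eq_iff)

lemma Rm_entry: "Rm L M $ (i,j) = L (mrow M i) $ j"
  unfolding Rm_def mrow_def by simp

lemma row_Rm: "mrow (Rm L M) i = L (mrow M i)"
  by (simp add: vec_eq_iff mrow_def Rm_entry[unfolded mrow_def])

lemma mat_eq_rows: "(M::'k::field^('n::finite \<times> 'm::finite)) = N \<longleftrightarrow> (\<forall>i. mrow M i = mrow N i)"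
  unfolding mrow_def vec_eq_iff by auto

lemma Gamma_change:
  assumes "is_Fq_basis emb \<gamma>" "is_Fq_basis emb \<gamma>'"
  shows "Gamma_vec emb \<gamma>' v = Rm (Lmap emb \<gamma> \<gamma>') (Gamma_vec emb \<gamma> v)"
  unfolding mat_eq_rows row_Rm Gamma_row Lmap_def
  using coord_props(1)[OF assms(1)] by metis


lemma mrow_add: "mrow (M + N) i = mrow M i + mrow N i"
  by (simp add: mrow_def vec_eq_iff)
lemma mrow_scale: "mrow (c *s M) i = c *s mrow M i"
  by (simp add: mrow_def vec_eq_iff)

lemma Rm_linear:
  assumes lf: "Vector_Spaces.linear (*s) (*s) L"
  shows "Vector_Spaces.linear (*s) (*s) (Rm L :: 'k::field^('n::finite \<times> 'm::finite) \<Rightarrow> _)"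
proof -
  interpret lf: Vector_Spaces.linear "(*s)" "(*s)" L by fact
  show ?thesis unfolding Vector_Spaces.linear_iff
    by (simp add: vec.vector_space_axioms mat_eq_rows row_Rm mrow_add mrow_scale lf.add lf.scale)
qed

lemma Rm_comp: assumes "\<And>c. L' (L c) = c" shows "Rm L' (Rm L M) = M"
  by (simp add: mat_eq_rows row_Rm assms)

lemma lin_expand:
  assumes lf: "Vector_Spaces.linear (*s) (*s) (f :: 'k::field^'m::finite \<Rightarrow> 'k^'p::finite)"
  shows "f x = (\<Sum>j\<in>UNIV. x$j *s f (axis j 1))"
proof -
  interpret lf: Vector_Spaces.linear "(*s)" "(*s)" f by fact
  have "f x = f (\<Sum>j\<in>UNIV. x$j *s axis j 1)" by (simp add: basis_expansion)
  also have "\<dots> = (\<Sum>j\<in>UNIV. x$j *s f (axis j 1))" by (simp add: lf.sum lf.scale)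
  finally show ?thesis .
qed

lemma lin_component:
  assumes lf: "Vector_Spaces.linear (*s) (*s) (f :: 'k::field^'m::finite \<Rightarrow> 'k^'p::finite)"
  shows "f x $ k = (\<Sum>j\<in>UNIV. x$j * f (axis j 1) $ k)"
  by (subst lin_expand[OF lf]) (simp add: sum_component)

lemma mcol_Rm:
  assumes lf: "Vector_Spaces.linear (*s) (*s) L"
  shows "mcol (Rm L M) k = (\<Sum>j\<in>UNIV. L (axis j 1) $ k *s mcol M j)"
  unfolding vec_eq_iff
proof
  fix i
  have "mcol (Rm L M) k $ i = L (mrow M i) $ k" by (simp add: mcol_def Rm_entry)
  also have "\<dots> = (\<Sum>j\<in>UNIV. mrow M i $ j * L (axis j 1) $ k)" by (rule lin_component[OF lf])
  also have "\<dots> = (\<Sum>j\<in>UNIV. L (axis j 1) $ k *s mcol M j) $ i"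
    by (simp add: sum_component mcol_def mrow_def mult.commute)
  finally show "mcol (Rm L M) k $ i = (\<Sum>j\<in>UNIV. L (axis j 1) $ k *s mcol M j) $ i" .
qed

lemma colsp_sub:
  assumes "vec.subspace J"
  shows "colsp M \<subseteq> J \<longleftrightarrow> (\<forall>j. mcol M j \<in> J)"
proof -
  have e: "colsp M = vec.span (range (mcol M))" unfolding colsp_def mcol_def ..
  show ?thesis unfolding e
  proof
    assume "vec.span (range (mcol M)) \<subseteq> J"
    then show "\<forall>j. mcol M j \<in> J" using vec.span_superset[of "range (mcol M)"] by auto
  next
    assume "\<forall>j. mcol M j \<in> J"
    then have "range (mcol M) \<subseteq> J" by auto
    then show "vec.span (range (mcol M)) \<subseteq> J" by (rule vec.span_minimal[OF _ assms])
  qed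
qed

lemma colsp_Rm:
  assumes lf: "Vector_Spaces.linear (*s) (*s) L" and J: "vec.subspace J" and "colsp M \<subseteq> J"
  shows "colsp (Rm L M) \<subseteq> J"
proof -
  have h: "\<forall>j. mcol M j \<in> J" using assms(3) by (rule colsp_sub[OF J, THEN iffD1])
  have "mcol (Rm L M) k \<in> J" for k
  proof -
    have e: "mcol (Rm L M) k = (\<Sum>j\<in>UNIV. L (axis j 1) $ k *s mcol M j)" by (rule mcol_Rm[OF lf])
    have "(\<Sum>j\<in>UNIV. L (axis j 1) $ k *s mcol M j) \<in> J"
    proof (rule vec.subspace_sum[OF J])
      fix j show "L (axis j 1) $ k *s mcol M j \<in> J" by (rule vec.subspace_scale[OF J h[rule_format]])
    qed
    then show ?thesis unfolding e .
  qed
  then show ?thesis by (rule colsp_sub[OF J, THEN iffD2, OF allI])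
qed

lemma rowsp_Rm:
  assumes lf: "Vector_Spaces.linear (*s) (*s) L"
  shows "rowsp (Rm L M) = L ` rowsp M"
proof -
  interpret lf: Vector_Spaces.linear "(*s)" "(*s)" L by fact
  have e: "\<And>M. rowsp M = vec.span (range (mrow M))" unfolding rowsp_def mrow_def by simp
  have "range (mrow (Rm L M)) = L ` range (mrow M)" by (auto simp: row_Rm)
  then show ?thesis unfolding e by (simp add: lf.span_image)
qed

definition adj :: "('k::field^'m::finite \<Rightarrow> 'k^'m) \<Rightarrow> 'k^'m \<Rightarrow> 'k^'m" where
  "adj B a = (\<chi> i. \<Sum>j\<in>UNIV. B (axis i 1) $ j * a$j)"

lemma adj_prop:
  assumes lf: "Vector_Spaces.linear (*s) (*s) B"
  shows "(\<Sum>i\<in>UNIV. y$i * adj B a $ i) = (\<Sum>j\<in>UNIV. B y $ j * a$j)"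
proof -
  have "(\<Sum>i\<in>UNIV. y$i * adj B a $ i) = (\<Sum>i\<in>UNIV. \<Sum>j\<in>UNIV. y$i * (B (axis i 1) $ j * a$j))"
    by (simp add: adj_def sum_distrib_left)
  also have "\<dots> = (\<Sum>j\<in>UNIV. \<Sum>i\<in>UNIV. y$i * (B (axis i 1) $ j * a$j))" by (rule sum.swap)
  also have "\<dots> = (\<Sum>j\<in>UNIV. B y $ j * a$j)"
    unfolding lin_component[OF lf, of y] by (simp add: sum_distrib_right mult.assoc)
  finally show ?thesis .
qed

lemma adj_linear: "Vector_Spaces.linear (*s) (*s) (adj B)"
  unfolding Vector_Spaces.linear_iff
  by (simp add: vec.vector_space_axioms adj_def vec_eq_iff distrib_left sum.distrib sum_distrib_left mult.left_commute)

lemma axis_sum: "(\<Sum>j\<in>UNIV. axis k (1::'k::field) $ j * a$j) = a$k"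
proof -
  have "(\<Sum>j\<in>UNIV. axis k (1::'k) $ j * a$j) = (\<Sum>j\<in>UNIV. if j = k then a$j else 0)"
    by (rule sum.cong) (auto simp: axis_def)
  also have "\<dots> = a$k" by simp
  finally show ?thesis .
qed

lemma adj_bij:
  assumes lf: "Vector_Spaces.linear (*s) (*s) (B :: 'k::{field,finite}^'m::finite \<Rightarrow> _)" and inv: "\<And>c. B (L c) = c"
  shows "bij (adj B)"
proof -
  have "inj (adj B)"
  proof (rule injI)
    fix a b assume h: "adj B a = adj B b"
    show "a = b" unfolding vec_eq_iff
    proof
      fix k
      have "(\<Sum>i\<in>UNIV. L (axis k 1)$i * adj B a $ i) = (\<Sum>i\<in>UNIV. L (axis k 1)$i * adj B b $ i)"
        using h by simp
      then show "a$k = b$k" unfolding adj_prop[OF lf] inv axis_sum .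
    qed
  qed
  then show ?thesis using finite_UNIV_inj_surj[of "adj B"] by (simp add: bij_def)
qed

lemma orth_subspace: "vec.subspace (orth J)"
  unfolding vec.subspace_def orth_def
  by (auto simp: distrib_right sum.distrib mult.assoc simp flip: sum_distrib_left)

lemma image_filter:
  assumes "\<And>M. M \<in> G \<Longrightarrow> P (R M) \<longleftrightarrow> Q M"
  shows "{N \<in> R ` G. P N} = R ` {M \<in> G. Q M}"
  using assms by auto


theorem proposition5p9:
  fixes emb :: "'k::{field,finite} \<Rightarrow> 'K::{field,finite}"
    and \<gamma> \<gamma>' :: "'m::finite \<Rightarrow> 'K"
    and C :: "('K^'n::finite) set"
  assumes hom_add: "\<forall>a b. emb (a + b) = emb a + emb b"
    and hom_mult: "\<forall>a b. emb (a * b) = emb a * emb b"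
    and hom_one: "emb 1 = 1"
    and n2: "2 \<le> CARD('n)"
    and nm: "CARD('n) \<le> CARD('m)"
    and code: "vec.subspace C"
    and basis: "is_Fq_basis emb \<gamma>"
    and basis': "is_Fq_basis emb \<gamma>'"
  shows "(\<forall>J::('k^'n) set. vec.subspace J \<longrightarrow>
            rho_c (Gamma_code emb \<gamma> C) J = rho_c (Gamma_code emb \<gamma>' C) J)
         \<and> pair_equiv (rho_r (Gamma_code emb \<gamma> C)) (rho_r (Gamma_code emb \<gamma>' C))"
proof -
  define L where "L = Lmap emb \<gamma> \<gamma>'"
  define L' where "L' = Lmap emb \<gamma>' \<gamma>"
  define R :: "'k^('n \<times> 'm) \<Rightarrow> 'k^('n \<times> 'm)" where "R = Rm L"
  define GC where "GC = Gamma_code emb \<gamma> C"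
  define GC' where "GC' = Gamma_code emb \<gamma>' C"
  have linL: "Vector_Spaces.linear (*s) (*s) L" unfolding L_def by (rule Lmap_linear[OF basis' hom_add hom_mult])
  have linL': "Vector_Spaces.linear (*s) (*s) L'" unfolding L'_def by (rule Lmap_linear[OF basis hom_add hom_mult])
  have invL: "\<And>c. L' (L c) = c" unfolding L_def L'_def by (rule Lmap_inv[OF basis basis'])
  have invL2: "\<And>c. L (L' c) = c" unfolding L_def L'_def by (rule Lmap_inv[OF basis' basis])
  have linR: "Vector_Spaces.linear (*s) (*s) R" unfolding R_def by (rule Rm_linear[OF linL])
  have RR: "\<And>M. Rm L' (R M) = M" unfolding R_def by (rule Rm_comp[of L' L, OF invL])
  have injR: "inj R" by (rule inj_on_inverseI[of _ "Rm L'"]) (rule RR)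
  have GCeq: "GC' = R ` GC"
    unfolding GC'_def GC_def Gamma_code_def image_image R_def L_def
    by (rule image_cong[OF refl Gamma_change[OF basis basis']])
  have dimR: "\<And>S. vec.dim (R ` S) = vec.dim S"
    by (rule vec.dim_image_eq[OF linR inj_on_subset[OF injR subset_UNIV]])
  have part1: "\<forall>J::('k^'n) set. vec.subspace J \<longrightarrow> rho_c GC J = rho_c GC' J"
  proof (intro allI impI)
    fix J :: "('k^'n) set"
    have sub: "vec.subspace (orth J)" by (rule orth_subspace)
    have ceq: "colsp (R M) \<subseteq> orth J \<longleftrightarrow> colsp M \<subseteq> orth J" for M
    proof
      assume "colsp (R M) \<subseteq> orth J"
      from colsp_Rm[OF linL' sub this] show "colsp M \<subseteq> orth J" unfolding RR .
    next
      assume "colsp M \<subseteq> orth J"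
      from colsp_Rm[OF linL sub this] show "colsp (R M) \<subseteq> orth J" unfolding R_def .
    qed
    have "code_c GC' (orth J) = R ` code_c GC (orth J)"
      unfolding code_c_def GCeq by (rule image_filter) (rule ceq)
    then show "rho_c GC J = rho_c GC' J" unfolding rho_c_def GCeq by (simp add: dimR)
  qed
  define \<phi> where "\<phi> = adj L'"
  have linphi: "Vector_Spaces.linear (*s) (*s) \<phi>" unfolding \<phi>_def by (rule adj_linear)
  have bijphi: "bij \<phi>" unfolding \<phi>_def by (rule adj_bij[OF linL' invL])
  have key: "(\<Sum>i\<in>UNIV. L x $ i * \<phi> a $ i) = (\<Sum>i\<in>UNIV. x$i * a$i)" for x a
    unfolding \<phi>_def adj_prop[OF linL'] invL ..
  have part2: "pair_equiv (rho_r GC) (rho_r GC')"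
    unfolding pair_equiv_def
  proof (intro exI conjI allI impI)
    show "Vector_Spaces.linear (*s) (*s) \<phi>" by (rule linphi)
    show "bij \<phi>" by (rule bijphi)
    fix A :: "('k^'m) set"
    have req: "rowsp (R M) \<subseteq> orth (\<phi> ` A) \<longleftrightarrow> rowsp M \<subseteq> orth A" for M
      unfolding R_def rowsp_Rm[OF linL] by (auto simp: orth_def key)
    have "code_r GC' (orth (\<phi> ` A)) = R ` code_r GC (orth A)"
      unfolding code_r_def GCeq by (rule image_filter) (rule req)
    then show "rho_r GC A = rho_r GC' (\<phi> ` A)" unfolding rho_r_def GCeq by (simp add: dimR)
  qed
  show ?thesis using part1 part2 unfolding GC_def GC'_def by blast
qed

end
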